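(* Let $\mathrm{Cl}_{p,q}$ be a non-degenerate real Clifford algebra with generators $e_1,\dots,e_n$, $n=p+q$, and let $\pi$ be the canonical matrix map defined below (extended linearly to $\mathrm{Cl}_{p,q}$). Let $e_s$ and $e_t$ be generators of $\mathrm{Cl}_{p,q}$. Then: (1) $\pi$ distributes over the Clifford product: $\pi(e_se_t)=\pi(e_s)\,\pi(e_t)$; (2) the set of all matrices $\mathbf{E}_S=\pi(e_S)$, $e_S\in\mathbf{B}$, forms a multiplicative semigroup.
   Context: Generators satisfy $e_ie_j=-e_je_i$ ($i\ne j$) and $e_i^2=\sigma_i\in\{1,-1\}$. For a multi-index $S=(s_1<\dots<s_m)\subseteq\{1,\dots,n\}$ let $e_S=e_{s_1}\cdots e_{s_m}$, $e_\emptyset=1$. The extended basis $\mathbf{B}$ is the list of all $2^n$ blades $e_S$ ordered by a fixed total order $\prec$ (extending $e_i\prec e_j$ for $i<j$, with $e_\emptyset=1$ first); each blade is indexed by its ordinal in this list. For blades $e_M,e_N$ one has $e_Me_N=m_{MN}\,e_{M\triangle N}$ with $m_{MN}\in\{1,-1\}$ ($\triangle$ = symmetric difference). The multiplication table is the $2^n\times 2^n$ array $\mathbf{M}=(e_Me_N)_{M,N}$. For a blade $e_S$, the coefficient map $C_S$ acts entrywise, sending an entry $x\,e_U$ to $x$ if $U=S$ and to $0$ otherwise; $\mathbf{A}_S:=C_S(\mathbf{M})$, i.e. $(\mathbf{A}_S)_{MN}=m_{MN}$ if $M\triangle N=S$ and $0$ otherwise. $\mathbf{G}$ is the diagonal $2^n\times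 2^n$ real matrix with diagonal entries $\sigma_M=e_M\ast e_M=\langle e_Me_M\rangle_0\in\{1,-1\}$. The canonical matrix map is $\pi(e_S)=\mathbf{E}_S:=\mathbf{G}\mathbf{A}_S$ (real $2^n\times 2^n$ matrix), extended linearly to all of $\mathrm{Cl}_{p,q}$. *)

theory Defs
  imports "Jordan_Normal_Form.Matrix"
begin

text \<open>The blade product e_M e_N = m_MN e_(M sym-diff N), where the sign m_MN is obtained by
  reordering generators (anticommutation) and contracting e_i e_i = sigma_i.\<close>

definition symdiff :: "nat set \<Rightarrow> nat set \<Rightarrow> nat set" where
  "symdiff M N = (M - N) \<union> (N - M)"

definition msign :: "(nat \<Rightarrow> real) \<Rightarrow> nat set \<Rightarrow> nat set \<Rightarrow> real" where
  "msign \<sigma> M N = (-1) ^ card {(i, j). i \<in> M \<and> j \<in> N \<and> j < i} * (\<Prod>i\<in>M \<inter> N. \<sigma> i)"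

text \<open>sigma_M = scalar part of e_M e_M\<close>
definition sigmaB :: "(nat \<Rightarrow> real) \<Rightarrow> nat set \<Rightarrow> real" where
  "sigmaB \<sigma> M = msign \<sigma> M M"

text \<open>Elements of Cl_{p,q}: coefficient functions on multi-indices (support in Pow {1..n}).\<close>
definition blade :: "nat set \<Rightarrow> (nat set \<Rightarrow> real)" where
  "blade S = (\<lambda>U. if U = S then 1 else 0)"

definition clprod :: "nat \<Rightarrow> (nat \<Rightarrow> real) \<Rightarrow> (nat set \<Rightarrow> real) \<Rightarrow> (nat set \<Rightarrow> real) \<Rightarrow> (nat set \<Rightarrow> real)" where
  "clprod n \<sigma> x y = (\<lambda>U. \<Sum>M\<in>Pow {1..n}. \<Sum>N\<in>Pow {1..n}.
      if symdiff M N = U then x M * y N * msign \<sigma> M N else 0)"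

text \<open>bl enumerates the extended basis B: bl k is the blade with ordinal k (0-based).\<close>
definition Gmat :: "nat \<Rightarrow> (nat \<Rightarrow> real) \<Rightarrow> (nat \<Rightarrow> nat set) \<Rightarrow> real mat" where
  "Gmat n \<sigma> bl = mat (2^n) (2^n) (\<lambda>(i, j). if i = j then sigmaB \<sigma> (bl i) else 0)"

definition Amat :: "nat \<Rightarrow> (nat \<Rightarrow> real) \<Rightarrow> (nat \<Rightarrow> nat set) \<Rightarrow> nat set \<Rightarrow> real mat" where
  "Amat n \<sigma> bl S = mat (2^n) (2^n)
     (\<lambda>(i, j). if symdiff (bl i) (bl j) = S then msign \<sigma> (bl i) (bl j) else 0)"

definition Emat :: "nat \<Rightarrow> (nat \<Rightarrow> real) \<Rightarrow> (nat \<Rightarrow> nat set) \<Rightarrow> nat set \<Rightarrow> real mat" where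
  "Emat n \<sigma> bl S = Gmat n \<sigma> bl * Amat n \<sigma> bl S"

definition cpi :: "nat \<Rightarrow> (nat \<Rightarrow> real) \<Rightarrow> (nat \<Rightarrow> nat set) \<Rightarrow> (nat set \<Rightarrow> real) \<Rightarrow> real mat" where
  "cpi n \<sigma> bl x = mat (2^n) (2^n)
     (\<lambda>(i, j). \<Sum>S\<in>Pow {1..n}. x S * Emat n \<sigma> bl S $$ (i, j))"

end

theory Submission
  imports Defs
begin

lemma sd_simps:
  "symdiff A B = symdiff B A"
  "symdiff (symdiff A B) C = symdiff A (symdiff B C)"
  "symdiff A A = {}" "symdiff A {} = A" "symdiff {} A = A"
  by (auto simp: symdiff_def)

lemma sd_left: "symdiff A (symdiff A B) = B"
  by (auto simp: symdiff_def)

lemma sd_eq_iff: "(symdiff A B = C) = (B = symdiff A C)"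
  by (auto simp: symdiff_def)

lemma sign_card_sd:
  assumes "finite X" "finite Y"
  shows "(-1::real) ^ card ((X - Y) \<union> (Y - X)) = (-1) ^ card X * (-1) ^ card Y"
proof -
  have cx: "card X = card (X - Y) + card (X \<inter> Y)"
  proof -
    have "X = (X - Y) \<union> (X \<inter> Y)" by blast
    then show ?thesis using assms by (metis card_Un_disjoint finite_Diff finite_Int Diff_disjoint Int_Diff inf_commute inf_bot_right)
  qed
  have cy: "card Y = card (Y - X) + card (X \<inter> Y)"
  proof -
    have "Y = (Y - X) \<union> (X \<inter> Y)" by blast
    then show ?thesis using assms by (metis card_Un_disjoint finite_Diff finite_Int Diff_disjoint Int_Diff inf_commute inf_bot_right)
  qed
  have cs: "card ((X - Y) \<union> (Y - X)) = card (X - Y) + card (Y - X)"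
    using assms by (subst card_Un_disjoint) auto
  have "((-1::real) ^ card (X \<inter> Y))^2 = 1" by (simp add: power_even_eq[symmetric] )
  then show ?thesis unfolding cx cy cs power_add
    by (simp add: power2_eq_square algebra_simps)
qed

lemma fin_sd: "finite A \<Longrightarrow> finite B \<Longrightarrow> finite (symdiff A B)"
  by (simp add: symdiff_def)

definition inv2 :: "nat set \<Rightarrow> nat set \<Rightarrow> (nat \<times> nat) set" where
  "inv2 A B = {(i, j). i \<in> A \<and> j \<in> B \<and> j < i}"

lemma inv2_fin: "finite A \<Longrightarrow> finite B \<Longrightarrow> finite (inv2 A B)"
  by (rule finite_subset[of _ "A \<times> B"]) (auto simp: inv2_def)

lemma inv2_sd1: "inv2 (symdiff A B) C = (inv2 A C - inv2 B C) \<union> (inv2 B C - inv2 A C)"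
  by (auto simp: inv2_def symdiff_def)
lemma inv2_sd2: "inv2 C (symdiff A B) = (inv2 C A - inv2 C B) \<union> (inv2 C B - inv2 C A)"
  by (auto simp: inv2_def symdiff_def)

definition II :: "nat set \<Rightarrow> nat set \<Rightarrow> real" where
  "II A B = (-1) ^ card (inv2 A B)"

lemma II_sd1: "finite A \<Longrightarrow> finite B \<Longrightarrow> finite C \<Longrightarrow> II (symdiff A B) C = II A C * II B C"
  unfolding II_def inv2_sd1 by (rule sign_card_sd) (auto intro: inv2_fin)
lemma II_sd2: "finite A \<Longrightarrow> finite B \<Longrightarrow> finite C \<Longrightarrow> II C (symdiff A B) = II C A * II C B"
  unfolding II_def inv2_sd2 by (rule sign_card_sd) (auto intro: inv2_fin)
lemma II_sq: "II A B * II A B = 1"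
  unfolding II_def by (simp add: power_add[symmetric])

lemma prod_sd:
  assumes "finite X" "finite Y" "\<forall>i\<in>X \<inter> Y. \<sigma> i = 1 \<or> \<sigma> i = -1"
  shows "(\<Prod>i\<in>symdiff X Y. \<sigma> i) = (\<Prod>i\<in>X. \<sigma> i) * (\<Prod>i\<in>Y. (\<sigma> i::real))"
proof -
  have px: "(\<Prod>i\<in>X. \<sigma> i) = (\<Prod>i\<in>X - Y. \<sigma> i) * (\<Prod>i\<in>X \<inter> Y. \<sigma> i)"
  proof -
    have "X = (X - Y) \<union> (X \<inter> Y)" by blast
    then show ?thesis using assms by (metis prod.union_disjoint finite_Diff finite_Int Diff_disjoint Int_Diff inf_commute inf_bot_right)
  qed
  have py: "(\<Prod>i\<in>Y. \<sigma> i) = (\<Prod>i\<in>Y - X. \<sigma> i) * (\<Prod>i\<in>X \<inter> Y. \<sigma> i)"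
  proof -
    have "Y = (Y - X) \<union> (X \<inter> Y)" by blast
    then show ?thesis using assms by (metis prod.union_disjoint finite_Diff finite_Int Diff_disjoint Int_Diff inf_commute inf_bot_right)
  qed
  have ps: "(\<Prod>i\<in>symdiff X Y. \<sigma> i) = (\<Prod>i\<in>X - Y. \<sigma> i) * (\<Prod>i\<in>Y - X. \<sigma> i)"
    unfolding symdiff_def using assms by (subst prod.union_disjoint) auto
  have "(\<Prod>i\<in>X \<inter> Y. \<sigma> i) * (\<Prod>i\<in>X \<inter> Y. \<sigma> i) = (\<Prod>i\<in>X \<inter> Y. \<sigma> i * \<sigma> i)"
    by (simp add: prod.distrib)
  also have "\<dots> = 1"
  proof (rule prod.neutral, rule ballI)
    fix x assume "x \<in> X \<inter> Y"
    then have "\<sigma> x = 1 \<or> \<sigma> x = -1" using assms(3) by blast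
    then show "\<sigma> x * \<sigma> x = 1" by auto
  qed
  finally have sq: "(\<Prod>i\<in>X \<inter> Y. \<sigma> i) * (\<Prod>i\<in>X \<inter> Y. \<sigma> i) = 1" .
  show ?thesis unfolding px py ps
    by (metis (no_types, lifting) mult.assoc mult.commute mult.left_commute mult_1 sq)
qed

lemma msign_II: "msign \<sigma> M N = II M N * (\<Prod>i\<in>M \<inter> N. \<sigma> i)"
  unfolding msign_def II_def inv2_def by simp

lemma key:
  assumes "M \<subseteq> {1..n}" "N \<subseteq> {1..n}" "K \<subseteq> {1..n}"
    and s: "\<forall>i\<in>{1..n}. \<sigma> i = 1 \<or> \<sigma> i = -1"
  shows "msign \<sigma> M N * sigmaB \<sigma> N * msign \<sigma> N K
       = msign \<sigma> (symdiff M N) (symdiff N K) * msign \<sigma> M K"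
proof -
  have f: "finite M" "finite N" "finite K" using assms finite_subset by blast+
  define P where "P X = (\<Prod>i\<in>X. \<sigma> i)" for X
  have Psd: "P (symdiff X Y) = P X * P Y" if "X \<subseteq> {1..n}" "Y \<subseteq> {1..n}" for X Y
    unfolding P_def using that s by (intro prod_sd) (auto intro: finite_subset)
  have sub: "X \<inter> Y \<subseteq> {1..n}" if "X \<subseteq> {1..n}" for X Y using that by auto
  have sds: "symdiff X Y \<subseteq> {1..n}" if "X \<subseteq> {1..n}" "Y \<subseteq> {1..n}" for X Y
    using that by (auto simp: symdiff_def)
  have e1: "(symdiff M N) \<inter> (symdiff N K) = symdiff (symdiff (symdiff (M \<inter> N) (M \<inter> K)) N) (N \<inter> K)"
    by (auto simp: symdiff_def)
  have e2: "P (symdiff M N \<inter> symdiff N K) * P (M \<inter> K) = P (M \<inter> N) * P N * P (N \<inter> K)"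
  proof -
    have "P (symdiff M N \<inter> symdiff N K) = P (M \<inter> N) * P (M \<inter> K) * P N * P (N \<inter> K)"
    proof -
      have a: "M \<inter> N \<subseteq> {1..n}" "M \<inter> K \<subseteq> {1..n}" "N \<inter> K \<subseteq> {1..n}" using assms by auto
      have b: "symdiff (M \<inter> N) (M \<inter> K) \<subseteq> {1..n}" using a sds by blast
      have c: "symdiff (symdiff (M \<inter> N) (M \<inter> K)) N \<subseteq> {1..n}" using b assms sds by blast
      show ?thesis unfolding e1 Psd[OF c a(3)] Psd[OF b assms(2)] Psd[OF a(1,2)] ..
    qed
    moreover have "P (M \<inter> K) * P (M \<inter> K) = 1"
      using Psd[of "M \<inter> K" "M \<inter> K"] assms by (simp add: sd_simps P_def le_infI1)
    ultimately show ?thesis by (metis mult.commute mult.left_commute mult_1_right)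
  qed
  have e3: "II (symdiff M N) (symdiff N K) * II M K = II M N * II N N * II N K"
  proof -
    have "II (symdiff M N) (symdiff N K) = II M N * II M K * II N N * II N K"
      using f by (simp add: II_sd1 II_sd2 fin_sd)
    then show ?thesis using II_sq[of M K] by (metis mult.commute mult.left_commute mult_1_right)
  qed
  show ?thesis
    unfolding sigmaB_def msign_II P_def[symmetric] using e2 e3 
    by (simp add: algebra_simps)
qed



lemma Emat_carrier: "Emat n \<sigma> bl S \<in> carrier_mat (2^n) (2^n)"
  unfolding Emat_def Gmat_def Amat_def by auto

lemma Emat_entry:
  assumes "i < 2^n" "j < 2^n"
  shows "Emat n \<sigma> bl S $$ (i,j) = sigmaB \<sigma> (bl i) *
     (if symdiff (bl i) (bl j) = S then msign \<sigma> (bl i) (bl j) else 0)"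
proof -
  have "Emat n \<sigma> bl S $$ (i,j) = (\<Sum>k\<in>{0..<2^n}. (if i = k then sigmaB \<sigma> (bl i) else 0) *
     (if symdiff (bl k) (bl j) = S then msign \<sigma> (bl k) (bl j) else 0))"
    unfolding Emat_def Gmat_def Amat_def using assms
    by (simp add: scalar_prod_def)
  also have "\<dots> = (\<Sum>k\<in>{0..<2^n}. if i = k then sigmaB \<sigma> (bl i) *
     (if symdiff (bl i) (bl j) = S then msign \<sigma> (bl i) (bl j) else 0) else 0)"
    by (intro sum.cong) auto
  also have "\<dots> = sigmaB \<sigma> (bl i) *
     (if symdiff (bl i) (bl j) = S then msign \<sigma> (bl i) (bl j) else 0)"
    using assms by (simp add: sum.delta)
  finally show ?thesis .
qed

lemma Emat_mult:
  assumes bij: "bij_betw bl {..<2^n} (Pow {1..n})"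
    and s: "\<forall>i\<in>{1..n}. \<sigma> i = 1 \<or> \<sigma> i = -1"
    and ST: "S \<subseteq> {1..n}" "T \<subseteq> {1..n}"
  shows "Emat n \<sigma> bl S * Emat n \<sigma> bl T = msign \<sigma> S T \<cdot>\<^sub>m Emat n \<sigma> bl (symdiff S T)"
proof (rule eq_matI)
  have cS: "Emat n \<sigma> bl S \<in> carrier_mat (2^n) (2^n)" "Emat n \<sigma> bl T \<in> carrier_mat (2^n) (2^n)"
    "Emat n \<sigma> bl (symdiff S T) \<in> carrier_mat (2^n) (2^n)" by (rule Emat_carrier)+
  then show "dim_row (Emat n \<sigma> bl S * Emat n \<sigma> bl T) = dim_row (msign \<sigma> S T \<cdot>\<^sub>m Emat n \<sigma> bl (symdiff S T))"
    "dim_col (Emat n \<sigma> bl S * Emat n \<sigma> bl T) = dim_col (msign \<sigma> S T \<cdot>\<^sub>m Emat n \<sigma> bl (symdiff S T))"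
    by auto
  fix i k assume "i < dim_row (msign \<sigma> S T \<cdot>\<^sub>m Emat n \<sigma> bl (symdiff S T))"
    "k < dim_col (msign \<sigma> S T \<cdot>\<^sub>m Emat n \<sigma> bl (symdiff S T))"
  then have ik: "i < 2^n" "k < 2^n" using cS by auto
  have blP: "bl x \<subseteq> {1..n}" if "x < 2^n" for x using bij that unfolding bij_betw_def by auto
  have inj: "inj_on bl {..<2^n}" using bij unfolding bij_betw_def by auto
  have sdsub: "symdiff (bl i) S \<subseteq> {1..n}" using blP[OF ik(1)] ST by (auto simp: symdiff_def)
  then have "symdiff (bl i) S \<in> bl ` {..<2^n}" using bij unfolding bij_betw_def by auto
  then obtain j0 where j0: "j0 < 2^n" "bl j0 = symdiff (bl i) S" by auto
  define f where "f j = Emat n \<sigma> bl S $$ (i,j) * Emat n \<sigma> bl T $$ (j,k)" for j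
  have "(Emat n \<sigma> bl S * Emat n \<sigma> bl T) $$ (i,k) = (\<Sum>j\<in>{0..<2^n}. f j)"
    using cS ik by (simp add: scalar_prod_def f_def)
  also have "\<dots> = f j0 + (\<Sum>j\<in>{0..<2^n} - {j0}. f j)"
    using j0 by (subst sum.remove[of _ j0]) auto
  also have "(\<Sum>j\<in>{0..<2^n} - {j0}. f j) = 0"
  proof (rule sum.neutral, rule ballI)
    fix j assume j: "j \<in> {0..<2^n} - {j0}"
    then have "bl j \<noteq> bl j0" using inj j0 by (auto dest: inj_onD)
    then have "symdiff (bl i) (bl j) \<noteq> S" using j0 by (auto simp: sd_eq_iff)
    then show "f j = 0" using j ik unfolding f_def by (simp add: Emat_entry)
  qed
  also have "f j0 + 0 = (msign \<sigma> S T \<cdot>\<^sub>m Emat n \<sigma> bl (symdiff S T)) $$ (i,k)"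
  proof -
    define M where "M = bl i"
    define N where "N = bl j0"
    define K where "K = bl k"
    have MNK: "M \<subseteq> {1..n}" "N \<subseteq> {1..n}" "K \<subseteq> {1..n}" unfolding M_def N_def K_def
      using blP ik j0 by auto
    have S: "S = symdiff M N" unfolding M_def N_def j0 by (simp add: sd_left)
    have iff: "(symdiff N K = T) = (symdiff M K = symdiff S T)"
    proof -
      have "(symdiff M K = symdiff S T) = (symdiff M K = symdiff M (symdiff N T))"
        unfolding S sd_simps(2) ..
      also have "\<dots> = (K = symdiff N T)" by (metis sd_left)
      also have "\<dots> = (symdiff N K = T)" by (metis sd_left)
      finally show ?thesis by simp
    qed
    have "f j0 = sigmaB \<sigma> M * msign \<sigma> M N * (sigmaB \<sigma> N *
       (if symdiff N K = T then msign \<sigma> N K else 0))"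
    proof -
      have "symdiff M N = S" using S by simp
      then show ?thesis unfolding f_def using ik j0 unfolding M_def N_def K_def by (simp add: Emat_entry)
    qed
    also have "\<dots> = msign \<sigma> S T * (sigmaB \<sigma> M *
       (if symdiff M K = symdiff S T then msign \<sigma> M K else 0))"
    proof (cases "symdiff N K = T")
      case True
      have k: "msign \<sigma> M N * sigmaB \<sigma> N * msign \<sigma> N K = msign \<sigma> S T * msign \<sigma> M K"
        using key[OF MNK s] unfolding S True .
      have "sigmaB \<sigma> M * msign \<sigma> M N * (sigmaB \<sigma> N * msign \<sigma> N K)
          = sigmaB \<sigma> M * (msign \<sigma> M N * sigmaB \<sigma> N * msign \<sigma> N K)" by (simp add: algebra_simps)
      also have "\<dots> = msign \<sigma> S T * (sigmaB \<sigma> M * msign \<sigma> M K)" unfolding k by (simp add: algebra_simps)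
      finally show ?thesis using True iff by simp
    next
      case False
      then show ?thesis using iff by simp
    qed
    finally show ?thesis using ik cS unfolding M_def K_def by (simp add: Emat_entry)
  qed
  finally show "(Emat n \<sigma> bl S * Emat n \<sigma> bl T) $$ (i,k) = (msign \<sigma> S T \<cdot>\<^sub>m Emat n \<sigma> bl (symdiff S T)) $$ (i,k)" .
qed



lemma smult_smult_mat': "(a::real) \<cdot>\<^sub>m (b \<cdot>\<^sub>m A) = (a * b) \<cdot>\<^sub>m A"
  by (rule eq_matI) auto

lemma prod_pm1:
  assumes "finite X" "\<forall>i\<in>X. \<sigma> i = 1 \<or> \<sigma> i = -1"
  shows "(\<Prod>i\<in>X. \<sigma> i) = 1 \<or> (\<Prod>i\<in>X. \<sigma> i) = (-1::real)"
  using assms by (induction X rule: finite_induct) auto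

lemma msign_pm1:
  assumes "S \<subseteq> {1..n}" "\<forall>i\<in>{1..n}. \<sigma> i = 1 \<or> \<sigma> i = -1"
  shows "msign \<sigma> S T = 1 \<or> msign \<sigma> S T = -1"
proof -
  define a where "a = (\<Prod>i\<in>S \<inter> T. \<sigma> i)"
  define b where "b = (-1::real) ^ card {(i, j). i \<in> S \<and> j \<in> T \<and> j < i}"
  have "a = 1 \<or> a = -1" unfolding a_def
    using assms by (intro prod_pm1) (auto intro: finite_subset)
  moreover have "b = 1 \<or> b = -1" unfolding b_def
    by (cases "even (card {(i, j). i \<in> S \<and> j \<in> T \<and> j < i})") auto
  ultimately have "b * a = 1 \<or> b * a = -1" by auto
  then show ?thesis unfolding msign_def a_def b_def .
qed

lemma clprod_blades:
  assumes "s \<in> {1..n}" "t \<in> {1..n}"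
  shows "clprod n \<sigma> (blade {s}) (blade {t}) = (\<lambda>U. if U = symdiff {s} {t} then msign \<sigma> {s} {t} else 0)"
proof
  fix U
  have "clprod n \<sigma> (blade {s}) (blade {t}) U = (\<Sum>M\<in>Pow {1..n}. \<Sum>N\<in>Pow {1..n}.
      if N = {t} then (if M = {s} then (if symdiff M N = U then msign \<sigma> M N else 0) else 0) else 0)"
    unfolding clprod_def blade_def by (intro sum.cong) auto
  also have "\<dots> = (\<Sum>M\<in>Pow {1..n}.
      if M = {s} then (if symdiff M {t} = U then msign \<sigma> M {t} else 0) else 0)"
    using assms by (intro sum.cong) (auto simp: sum.delta)
  also have "\<dots> = (if symdiff {s} {t} = U then msign \<sigma> {s} {t} else 0)"
    using assms by (simp add: sum.delta)
  finally show "clprod n \<sigma> (blade {s}) (blade {t}) U = (if U = symdiff {s} {t} then msign \<sigma> {s} {t} else 0)"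
    by auto
qed

lemma cpi_blade_scaled:
  assumes "R \<subseteq> {1..n}"
  shows "cpi n \<sigma> bl (\<lambda>U. if U = R then c else 0) = c \<cdot>\<^sub>m Emat n \<sigma> bl R"
proof (rule eq_matI)
  have cR: "Emat n \<sigma> bl R \<in> carrier_mat (2^n) (2^n)" by (rule Emat_carrier)
  then show "dim_row (cpi n \<sigma> bl (\<lambda>U. if U = R then c else 0)) = dim_row (c \<cdot>\<^sub>m Emat n \<sigma> bl R)"
    "dim_col (cpi n \<sigma> bl (\<lambda>U. if U = R then c else 0)) = dim_col (c \<cdot>\<^sub>m Emat n \<sigma> bl R)"
    unfolding cpi_def by auto
  fix i j assume "i < dim_row (c \<cdot>\<^sub>m Emat n \<sigma> bl R)" "j < dim_col (c \<cdot>\<^sub>m Emat n \<sigma> bl R)"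
  then have ij: "i < 2^n" "j < 2^n" using cR by auto
  have "cpi n \<sigma> bl (\<lambda>U. if U = R then c else 0) $$ (i,j) =
      (\<Sum>S\<in>Pow {1..n}. if S = R then c * Emat n \<sigma> bl S $$ (i, j) else 0)"
  proof -
    have "cpi n \<sigma> bl (\<lambda>U. if U = R then c else 0) $$ (i,j) =
      (\<Sum>S\<in>Pow {1..n}. (if S = R then c else 0) * Emat n \<sigma> bl S $$ (i, j))"
      unfolding cpi_def using ij by simp
    also have "\<dots> = (\<Sum>S\<in>Pow {1..n}. if S = R then c * Emat n \<sigma> bl S $$ (i, j) else 0)"
      by (intro sum.cong refl) simp
    finally show ?thesis .
  qed
  also have "\<dots> = c * Emat n \<sigma> bl R $$ (i, j)" using assms by (simp add: sum.delta)
  finally show "cpi n \<sigma> bl (\<lambda>U. if U = R then c else 0) $$ (i,j) = (c \<cdot>\<^sub>m Emat n \<sigma> bl R) $$ (i,j)"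
    using ij cR by simp
qed

theorem theorem1:
  fixes p q n :: nat and \<sigma> :: "nat \<Rightarrow> real" and bl :: "nat \<Rightarrow> nat set" and s t :: nat
  assumes "n = p + q"
    and "\<forall>i\<in>{1..n}. \<sigma> i = 1 \<or> \<sigma> i = -1"
    and "card {i\<in>{1..n}. \<sigma> i = 1} = p"
    and "bij_betw bl {..<2^n} (Pow {1..n})"
    and "bl 0 = {}"
    and "\<forall>i\<in>{1..n}. \<forall>j\<in>{1..n}. \<forall>a<2^n. \<forall>b<2^n.
           i < j \<longrightarrow> bl a = {i} \<longrightarrow> bl b = {j} \<longrightarrow> a < b"
    and "s \<in> {1..n}" and "t \<in> {1..n}"
  shows "(cpi n \<sigma> bl (clprod n \<sigma> (blade {s}) (blade {t}))
           = Emat n \<sigma> bl {s} * Emat n \<sigma> bl {t})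
    \<and> (\<forall>A\<in>{c \<cdot>\<^sub>m Emat n \<sigma> bl S | c S. (c = 1 \<or> c = -1) \<and> S \<subseteq> {1..n}}.
         \<forall>B\<in>{c \<cdot>\<^sub>m Emat n \<sigma> bl S | c S. (c = 1 \<or> c = -1) \<and> S \<subseteq> {1..n}}.
           A * B \<in> {c \<cdot>\<^sub>m Emat n \<sigma> bl S | c S. (c = 1 \<or> c = -1) \<and> S \<subseteq> {1..n}})"
proof
  have sdsub: "symdiff S T \<subseteq> {1..n}" if "S \<subseteq> {1..n}" "T \<subseteq> {1..n}" for S T
    using that by (auto simp: symdiff_def)
  have st: "{s} \<subseteq> {1..n}" "{t} \<subseteq> {1..n}" using assms(7,8) by auto
  show "cpi n \<sigma> bl (clprod n \<sigma> (blade {s}) (blade {t})) = Emat n \<sigma> bl {s} * Emat n \<sigma> bl {t}"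
    unfolding clprod_blades[OF assms(7,8)] cpi_blade_scaled[OF sdsub[OF st]]
    using Emat_mult[OF assms(4) assms(2) st] by simp
  show "\<forall>A\<in>{c \<cdot>\<^sub>m Emat n \<sigma> bl S | c S. (c = 1 \<or> c = -1) \<and> S \<subseteq> {1..n}}.
         \<forall>B\<in>{c \<cdot>\<^sub>m Emat n \<sigma> bl S | c S. (c = 1 \<or> c = -1) \<and> S \<subseteq> {1..n}}.
           A * B \<in> {c \<cdot>\<^sub>m Emat n \<sigma> bl S | c S. (c = 1 \<or> c = -1) \<and> S \<subseteq> {1..n}}"
  proof (intro ballI)
    fix A B
    assume "A \<in> {c \<cdot>\<^sub>m Emat n \<sigma> bl S | c S. (c = 1 \<or> c = -1) \<and> S \<subseteq> {1..n}}"
    then obtain c S where A: "A = c \<cdot>\<^sub>m Emat n \<sigma> bl S" "c = 1 \<or> c = -1" "S \<subseteq> {1..n}" by blast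
    assume "B \<in> {c \<cdot>\<^sub>m Emat n \<sigma> bl S | c S. (c = 1 \<or> c = -1) \<and> S \<subseteq> {1..n}}"
    then obtain d T where B: "B = d \<cdot>\<^sub>m Emat n \<sigma> bl T" "d = 1 \<or> d = -1" "T \<subseteq> {1..n}" by blast
    have "A * B = (c * d) \<cdot>\<^sub>m (Emat n \<sigma> bl S * Emat n \<sigma> bl T)"
      unfolding A(1) B(1)
      by (simp add: mult_smult_assoc_mat[OF Emat_carrier smult_carrier_mat[OF Emat_carrier]]
          mult_smult_distrib[OF Emat_carrier Emat_carrier] smult_smult_mat')
    also have "\<dots> = (c * d * msign \<sigma> S T) \<cdot>\<^sub>m Emat n \<sigma> bl (symdiff S T)"
      unfolding Emat_mult[OF assms(4) assms(2) A(3) B(3)] smult_smult_mat' ..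
    finally have AB: "A * B = (c * d * msign \<sigma> S T) \<cdot>\<^sub>m Emat n \<sigma> bl (symdiff S T)" .
    have "c * d * msign \<sigma> S T = 1 \<or> c * d * msign \<sigma> S T = -1"
      using A(2) B(2) msign_pm1[OF A(3) assms(2), of T] by auto
    then show "A * B \<in> {c \<cdot>\<^sub>m Emat n \<sigma> bl S | c S. (c = 1 \<or> c = -1) \<and> S \<subseteq> {1..n}}"
      using AB sdsub[OF A(3) B(3)] by blast
  qed
qed


end
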